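(* Let $(X,d)$ be a metric space, let $\sigma$ and $\tau$ be conical bicombings on $X$, and let $n\ge1$ be an integer. For $x,y\in X$ set $c_{xy}(n;0):=x$, $c_{xy}(n;n):=y$ and \[ c_{xy}(n;i):=\sigma\big(\tau_{xy}(\tfrac{i-1}{n}),\tau_{xy}(\tfrac{i+1}{n}),\tfrac12\big)\quad(1\le i\le n-1), \] and define $c_\sigma(n;\tau)\colon X\times X\times[0,1]\to X$ by \[ c_\sigma(n;\tau)\big(x,y,(1-\lambda)\tfrac{i}{n}+\lambda\tfrac{i+1}{n}\big):=\sigma\big(c_{xy}(n;i),c_{xy}(n;i+1),\lambda\big) \] for $0\le i\le n-1$, $\lambda\in[0,1]$. Then $c_\sigma(n;\tau)$ is a conical bicombing on $X$. Moreover, if $\sigma$ is consistent, then $c_\sigma(n;\sigma)=\sigma$.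
   Context: A bicombing on $(X,d)$ is a map $\sigma\colon X\times X\times[0,1]\to X$ such that each $\sigma_{xy}:=\sigma(x,y,\cdot)$ is a geodesic from $x$ to $y$ ($\sigma_{xy}(0)=x$, $\sigma_{xy}(1)=y$, $d(\sigma_{xy}(s),\sigma_{xy}(t))=|s-t|d(x,y)$); it is conical if $d(\sigma_{xy}(t),\sigma_{x'y'}(t))\le(1-t)d(x,x')+t\,d(y,y')$ for all $x,y,x',y'$, $t\in[0,1]$. A bicombing $\sigma$ is consistent if $\sigma_{pq}([0,1])\subset\sigma_{xy}([0,1])$ whenever $p,q\in\sigma_{xy}([0,1])$. *)

theory Defs
  imports "HOL-Analysis.Analysis"
begin

text \<open>The metric space (X,d) is the whole carrier of a type of class metric_space.
  A bicombing is a map sigma x y t, only its values for t in [0,1] matter.\<close>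

definition bicombing :: "('a::metric_space \<Rightarrow> 'a \<Rightarrow> real \<Rightarrow> 'a) \<Rightarrow> bool" where
  "bicombing \<sigma> \<longleftrightarrow> (\<forall>x y. \<sigma> x y 0 = x \<and> \<sigma> x y 1 = y \<and>
     (\<forall>s\<in>{0..1}. \<forall>t\<in>{0..1}. dist (\<sigma> x y s) (\<sigma> x y t) = \<bar>s - t\<bar> * dist x y))"

definition conical_bicombing :: "('a::metric_space \<Rightarrow> 'a \<Rightarrow> real \<Rightarrow> 'a) \<Rightarrow> bool" where
  "conical_bicombing \<sigma> \<longleftrightarrow> bicombing \<sigma> \<and>
     (\<forall>x y x' y'. \<forall>t\<in>{0..1}.
        dist (\<sigma> x y t) (\<sigma> x' y' t) \<le> (1 - t) * dist x x' + t * dist y y')"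

definition consistent_bicombing :: "('a::metric_space \<Rightarrow> 'a \<Rightarrow> real \<Rightarrow> 'a) \<Rightarrow> bool" where
  "consistent_bicombing \<sigma> \<longleftrightarrow> bicombing \<sigma> \<and>
     (\<forall>x y p q. p \<in> \<sigma> x y ` {0..1} \<and> q \<in> \<sigma> x y ` {0..1} \<longrightarrow>
        \<sigma> p q ` {0..1} \<subseteq> \<sigma> x y ` {0..1})"

definition cpt :: "('a \<Rightarrow> 'a \<Rightarrow> real \<Rightarrow> 'a) \<Rightarrow> ('a \<Rightarrow> 'a \<Rightarrow> real \<Rightarrow> 'a) \<Rightarrow> nat \<Rightarrow> 'a \<Rightarrow> 'a \<Rightarrow> nat \<Rightarrow> 'a" where
  "cpt \<sigma> \<tau> n x y i =
     (if i = 0 then x else if i = n then y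
      else \<sigma> (\<tau> x y ((real i - 1) / real n)) (\<tau> x y ((real i + 1) / real n)) (1/2))"

text \<open>c_sigma(n;tau): for t in [0,1], t = (1-lambda) i/n + lambda (i+1)/n with
  i = min(floor(n t), n-1) and lambda = n t - i.\<close>
definition cbic :: "('a \<Rightarrow> 'a \<Rightarrow> real \<Rightarrow> 'a) \<Rightarrow> nat \<Rightarrow> ('a \<Rightarrow> 'a \<Rightarrow> real \<Rightarrow> 'a) \<Rightarrow> 'a \<Rightarrow> 'a \<Rightarrow> real \<Rightarrow> 'a" where
  "cbic \<sigma> n \<tau> x y t =
     (let i = min (nat \<lfloor>real n * t\<rfloor>) (n - 1); l = real n * t - real i
      in \<sigma> (cpt \<sigma> \<tau> n x y i) (cpt \<sigma> \<tau> n x y (i + 1)) l)"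

end

theory Submission
  imports Defs
begin

lemma bic_0: "bicombing \<sigma> \<Longrightarrow> \<sigma> x y 0 = x"
  unfolding bicombing_def by blast
lemma bic_1: "bicombing \<sigma> \<Longrightarrow> \<sigma> x y 1 = y"
  unfolding bicombing_def by blast
lemma bic_dist: "bicombing \<sigma> \<Longrightarrow> s \<in> {0..1} \<Longrightarrow> t \<in> {0..1} \<Longrightarrow>
   dist (\<sigma> x y s) (\<sigma> x y t) = \<bar>s - t\<bar> * dist x y"
  unfolding bicombing_def by blast
lemma con_dist: "conical_bicombing \<sigma> \<Longrightarrow> t \<in> {0..1} \<Longrightarrow>
   dist (\<sigma> x y t) (\<sigma> x' y' t) \<le> (1 - t) * dist x x' + t * dist y y'"
  unfolding conical_bicombing_def by blast
lemma con_bic: "conical_bicombing \<sigma> \<Longrightarrow> bicombing \<sigma>"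
  unfolding conical_bicombing_def by blast

lemma idx:
  assumes "n \<ge> 1" "t \<in> {0..1::real}"
  shows "min (nat \<lfloor>real n * t\<rfloor>) (n-1) < n \<and> real (min (nat \<lfloor>real n * t\<rfloor>) (n-1)) \<le> real n * t
     \<and> real n * t \<le> real (min (nat \<lfloor>real n * t\<rfloor>) (n-1)) + 1"
proof -
  have nt: "0 \<le> real n * t" "real n * t \<le> real n" using assms by auto
  have f0: "0 \<le> \<lfloor>real n * t\<rfloor>" using nt by simp
  have e: "real (nat \<lfloor>real n * t\<rfloor>) = of_int \<lfloor>real n * t\<rfloor>" using f0 by simp
  have a: "of_int \<lfloor>real n * t\<rfloor> \<le> real n * t" "real n * t < of_int \<lfloor>real n * t\<rfloor> + 1"
    by linarith+
  show ?thesis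
  proof (cases "nat \<lfloor>real n * t\<rfloor> \<le> n - 1")
    case True
    then show ?thesis using a e assms by (simp add: min_def)
  next
    case False
    then have "min (nat \<lfloor>real n * t\<rfloor>) (n-1) = n - 1" by simp
    moreover have "real (n-1) = real n - 1" using assms by simp
    moreover have "real (n - 1) \<le> real n * t"
      using False e a by linarith
    ultimately show ?thesis using assms nt by simp
  qed
qed

lemma cpt_step:
  assumes s: "conical_bicombing \<sigma>" and t: "conical_bicombing \<tau>" and n: "n \<ge> 1" and i: "i < n"
  shows "dist (cpt \<sigma> \<tau> n x y i) (cpt \<sigma> \<tau> n x y (i+1)) \<le> dist x y / real n"
proof -
  have bs: "bicombing \<sigma>" and bt: "bicombing \<tau>" using s t con_bic by auto
  have nn: "real n \<ge> 1" using n by simp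
  consider "i = 0" "n = 1" | "i = 0" "n \<ge> 2" | "i \<ge> 1" "i + 1 = n" | "i \<ge> 1" "i + 1 < n"
    using i n by linarith
  then show ?thesis
  proof cases
    case 1
    then show ?thesis by (simp add: cpt_def)
  next
    case 2
    let ?q = "\<tau> x y (2 / real n)"
    have h: "cpt \<sigma> \<tau> n x y (i+1) = \<sigma> x ?q (1/2)"
      using 2 bt by (simp add: cpt_def bic_0)
    have "dist (\<sigma> x ?q 0) (\<sigma> x ?q (1/2)) = 1/2 * dist x ?q"
      using bic_dist[OF bs, of 0 "1/2"] by simp
    moreover have "dist (\<tau> x y 0) ?q = 2 / real n * dist x y"
      using bic_dist[OF bt, of 0 "2/real n" x y] 2 by simp
    ultimately show ?thesis using 2 h bic_0[OF bs] bic_0[OF bt] by (simp add: cpt_def)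
  next
    case 3
    let ?p = "\<tau> x y ((real i - 1) / real n)"
    have h: "cpt \<sigma> \<tau> n x y i = \<sigma> ?p y (1/2)" "cpt \<sigma> \<tau> n x y (i+1) = y"
    proof -
      have "(real i + 1) / real n = 1" using 3 by (simp add: field_simps)
      moreover have "cpt \<sigma> \<tau> n x y i = \<sigma> ?p (\<tau> x y ((real i + 1) / real n)) (1/2)"
        using 3 unfolding cpt_def by auto
      ultimately show "cpt \<sigma> \<tau> n x y i = \<sigma> ?p y (1/2)" using bic_1[OF bt] by simp
      show "cpt \<sigma> \<tau> n x y (i+1) = y" using 3 by (simp add: cpt_def)
    qed
    have "dist (\<sigma> ?p y (1/2)) (\<sigma> ?p y 1) = 1/2 * dist ?p y"
      using bic_dist[OF bs, of "1/2" 1] by simp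
    moreover have "dist ?p (\<tau> x y 1) = 2 / real n * dist x y"
    proof -
      have r: "real n = real i + 1" using 3 by linarith
      have "dist ?p (\<tau> x y 1) = \<bar>(real i - 1) / real n - 1\<bar> * dist x y"
        using bic_dist[OF bt, of "(real i - 1) / real n" 1 x y] 3 r by simp
      also have "\<bar>(real i - 1) / real n - 1\<bar> = 2 / real n" using r 3 by (simp add: field_simps)
      finally show ?thesis .
    qed
    ultimately show ?thesis using h bic_1[OF bs] bic_1[OF bt] by simp
  next
    case 4
    have h: "cpt \<sigma> \<tau> n x y i = \<sigma> (\<tau> x y ((real i - 1) / real n)) (\<tau> x y ((real i + 1) / real n)) (1/2)"
       "cpt \<sigma> \<tau> n x y (i+1) = \<sigma> (\<tau> x y ((real i) / real n)) (\<tau> x y ((real i + 2) / real n)) (1/2)"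
      using 4 by (auto simp add: cpt_def add.commute)
    have d1: "dist (\<tau> x y ((real i - 1) / real n)) (\<tau> x y ((real i) / real n)) = dist x y / real n"
      using bic_dist[OF bt, of "(real i - 1) / real n" "real i / real n" x y] 4 nn
      by (simp add: field_simps)
    have d2: "dist (\<tau> x y ((real i + 1) / real n)) (\<tau> x y ((real i + 2) / real n)) = dist x y / real n"
      using bic_dist[OF bt, of "(real i + 1) / real n" "(real i + 2) / real n" x y] 4 nn
      by (simp add: field_simps)
    show ?thesis using con_dist[OF s, of "1/2" "\<tau> x y ((real i - 1) / real n)" "\<tau> x y ((real i + 1) / real n)"
       "\<tau> x y ((real i) / real n)" "\<tau> x y ((real i + 2) / real n)"] h d1 d2 by simp
  qed
qed

lemma cpt_con:
  assumes s: "conical_bicombing \<sigma>" and t: "conical_bicombing \<tau>" and n: "n \<ge> 1" and i: "i \<le> n"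
  shows "dist (cpt \<sigma> \<tau> n x y i) (cpt \<sigma> \<tau> n x' y' i)
     \<le> (1 - real i / real n) * dist x x' + (real i / real n) * dist y y'"
proof -
  have nn: "real n \<ge> 1" using n by simp
  consider "i = 0" | "i = n" | "i \<ge> 1" "i < n" using i by linarith
  then show ?thesis
  proof cases
    case 1 then show ?thesis by (simp add: cpt_def)
  next
    case 2 then show ?thesis using n by (simp add: cpt_def)
  next
    case 3
    define a where "a = (real i - 1) / real n"
    define b where "b = (real i + 1) / real n"
    have ab: "a \<in> {0..1}" "b \<in> {0..1}" using 3 nn unfolding a_def b_def
      by (auto simp: field_simps)
    have h: "cpt \<sigma> \<tau> n x y i = \<sigma> (\<tau> x y a) (\<tau> x y b) (1/2)"
      "cpt \<sigma> \<tau> n x' y' i = \<sigma> (\<tau> x' y' a) (\<tau> x' y' b) (1/2)"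
      using 3 unfolding cpt_def a_def b_def by auto
    have "dist (cpt \<sigma> \<tau> n x y i) (cpt \<sigma> \<tau> n x' y' i)
       \<le> 1/2 * dist (\<tau> x y a) (\<tau> x' y' a) + 1/2 * dist (\<tau> x y b) (\<tau> x' y' b)"
      using con_dist[OF s, of "1/2" "\<tau> x y a" "\<tau> x y b" "\<tau> x' y' a" "\<tau> x' y' b"] h by simp
    also have "\<dots> \<le> 1/2 * ((1 - a) * dist x x' + a * dist y y') + 1/2 * ((1 - b) * dist x x' + b * dist y y')"
      using con_dist[OF t ab(1), of x y x' y'] con_dist[OF t ab(2), of x y x' y'] by (intro add_mono mult_left_mono) auto
    also have "\<dots> = (1 - real i / real n) * dist x x' + (real i / real n) * dist y y'"
      using nn unfolding a_def b_def by (simp add: field_simps)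
    finally show ?thesis .
  qed
qed

lemma cpt_chain:
  assumes s: "conical_bicombing \<sigma>" and t: "conical_bicombing \<tau>" and n: "n \<ge> 1"
  shows "j \<le> m \<Longrightarrow> m \<le> n \<Longrightarrow> dist (cpt \<sigma> \<tau> n x y j) (cpt \<sigma> \<tau> n x y m) \<le> real (m - j) * (dist x y / real n)"
proof (induction m)
  case 0 then show ?case by simp
next
  case (Suc m)
  show ?case
  proof (cases "j = Suc m")
    case True then show ?thesis by simp
  next
    case False
    then have jm: "j \<le> m" using Suc by simp
    have "dist (cpt \<sigma> \<tau> n x y j) (cpt \<sigma> \<tau> n x y (Suc m)) \<le>
       dist (cpt \<sigma> \<tau> n x y j) (cpt \<sigma> \<tau> n x y m) + dist (cpt \<sigma> \<tau> n x y m) (cpt \<sigma> \<tau> n x y (m+1))"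
      by (simp add: dist_triangle)
    also have "\<dots> \<le> real (m - j) * (dist x y / real n) + dist x y / real n"
      using Suc jm cpt_step[OF s t n, of m x y] by (intro add_mono) auto
    also have "\<dots> = real (Suc m - j) * (dist x y / real n)"
    proof -
      have "real (Suc m - j) = real (m - j) + 1" using jm by (simp add: Suc_diff_le)
      then show ?thesis by (simp add: distrib_right add_divide_distrib)
    qed
    finally show ?thesis .
  qed
qed

lemma cbic_seg:
  "cbic \<sigma> n \<tau> x y t = \<sigma> (cpt \<sigma> \<tau> n x y (min (nat \<lfloor>real n * t\<rfloor>) (n-1)))
      (cpt \<sigma> \<tau> n x y (min (nat \<lfloor>real n * t\<rfloor>) (n-1) + 1)) (real n * t - real (min (nat \<lfloor>real n * t\<rfloor>) (n-1)))"
  by (simp add: cbic_def Let_def)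

lemma lip:
  assumes s: "conical_bicombing \<sigma>" and t: "conical_bicombing \<tau>" and n: "n \<ge> 1"
    and s01: "s0 \<in> {0..1}" and t01: "t0 \<in> {0..1}" and le: "s0 \<le> t0"
  shows "dist (cbic \<sigma> n \<tau> x y s0) (cbic \<sigma> n \<tau> x y t0) \<le> (t0 - s0) * dist x y"
proof -
  have bs: "bicombing \<sigma>" using s con_bic by auto
  define ks where "ks = min (nat \<lfloor>real n * s0\<rfloor>) (n-1)"
  define kt where "kt = min (nat \<lfloor>real n * t0\<rfloor>) (n-1)"
  define ls where "ls = real n * s0 - real ks"
  define lt where "lt = real n * t0 - real kt"
  define c where "c = cpt \<sigma> \<tau> n x y"
  define e where "e = dist x y / real n"
  have ne: "real n * e = dist x y" using n unfolding e_def by simp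
  have e0: "e \<ge> 0" unfolding e_def by simp
  have hs: "ks < n" "real ks \<le> real n * s0" "real n * s0 \<le> real ks + 1"
    using idx[OF n s01] unfolding ks_def by auto
  have it: "kt < n" "real kt \<le> real n * t0" "real n * t0 \<le> real kt + 1"
    using idx[OF n t01] unfolding kt_def by auto
  have gs: "cbic \<sigma> n \<tau> x y s0 = \<sigma> (c ks) (c (ks+1)) ls"
    unfolding ks_def ls_def c_def by (rule cbic_seg)
  have gt: "cbic \<sigma> n \<tau> x y t0 = \<sigma> (c kt) (c (kt+1)) lt"
    unfolding kt_def lt_def c_def by (rule cbic_seg)
  have l01: "ls \<in> {0..1}" "lt \<in> {0..1}" using hs it unfolding ls_def lt_def by auto
  have step: "\<And>i. i < n \<Longrightarrow> dist (c i) (c (i+1)) \<le> e"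
    unfolding c_def e_def using cpt_step[OF s t n] by blast
  have nts: "real n * t0 - real n * s0 = real n * (t0 - s0)" by (simp add: algebra_simps)
  consider "ks = kt" | "ks < kt" | "ks > kt" by linarith
  then show ?thesis
  proof cases
    case 1
    have "dist (cbic \<sigma> n \<tau> x y s0) (cbic \<sigma> n \<tau> x y t0) = \<bar>ls - lt\<bar> * dist (c ks) (c (ks+1))"
      using gs gt 1 bic_dist[OF bs l01] by simp
    also have "\<dots> \<le> \<bar>ls - lt\<bar> * e" using step hs(1) by (intro mult_left_mono) auto
    also have "\<bar>ls - lt\<bar> = real n * (t0 - s0)"
    proof -
      have "ls - lt = - (real n * (t0 - s0))" using 1 unfolding ls_def lt_def by (simp add: algebra_simps)
      moreover have "real n * (t0 - s0) \<ge> 0" using le by simp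
      ultimately show ?thesis by linarith
    qed
    finally show ?thesis using ne by (simp only: ne[symmetric] mult_ac)
  next
    case 2
    have d1: "dist (cbic \<sigma> n \<tau> x y s0) (c (ks+1)) \<le> (1 - ls) * e"
    proof -
      have "dist (cbic \<sigma> n \<tau> x y s0) (c (ks+1)) = dist (\<sigma> (c ks) (c (ks+1)) ls) (\<sigma> (c ks) (c (ks+1)) 1)"
        using gs bic_1[OF bs] by simp
      also have "\<dots> = (1 - ls) * dist (c ks) (c (ks+1))" using bic_dist[OF bs l01(1), of 1] l01 by simp
      also have "\<dots> \<le> (1 - ls) * e" using step hs(1) l01 by (intro mult_left_mono) auto
      finally show ?thesis .
    qed
    have d3: "dist (c kt) (cbic \<sigma> n \<tau> x y t0) \<le> lt * e"
    proof -
      have "dist (c kt) (cbic \<sigma> n \<tau> x y t0) = dist (\<sigma> (c kt) (c (kt+1)) 0) (\<sigma> (c kt) (c (kt+1)) lt)"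
        using gt bic_0[OF bs] by simp
      also have "\<dots> = lt * dist (c kt) (c (kt+1))" using bic_dist[OF bs _ l01(2), of 0] l01 by simp
      also have "\<dots> \<le> lt * e" using step it(1) l01 by (intro mult_left_mono) auto
      finally show ?thesis .
    qed
    have d2: "dist (c (ks+1)) (c kt) \<le> real (kt - (ks+1)) * e"
      using cpt_chain[OF s t n, of "ks+1" kt x y] 2 it unfolding c_def e_def by simp
    have "dist (cbic \<sigma> n \<tau> x y s0) (cbic \<sigma> n \<tau> x y t0) \<le>
        dist (cbic \<sigma> n \<tau> x y s0) (c (ks+1)) + dist (c (ks+1)) (c kt) + dist (c kt) (cbic \<sigma> n \<tau> x y t0)"
      by (meson dist_triangle add_right_mono order_trans)
    also have "\<dots> \<le> (1 - ls) * e + real (kt - (ks+1)) * e + lt * e"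
      using d1 d2 d3 by linarith
    also have "\<dots> = (1 - ls + real (kt - (ks+1)) + lt) * e" by (simp add: algebra_simps)
    also have "1 - ls + real (kt - (ks+1)) + lt = real n * (t0 - s0)"
    proof -
      have "real (kt - (ks+1)) = real kt - real ks - 1" using 2 by (simp add: of_nat_diff)
      then show ?thesis using nts unfolding ls_def lt_def by linarith
    qed
    finally show ?thesis using ne by (simp only: ne[symmetric] mult_ac)
  next
    case 3
    then have "real kt + 1 \<le> real ks" by simp
    moreover have "real n * s0 \<le> real n * t0" using le by (simp add: mult_left_mono)
    ultimately have "real n * s0 = real n * t0" using hs it by linarith
    then have "s0 = t0" using n by simp
    then show ?thesis by simp
  qed
qed


lemma cbic_0:
  assumes "n \<ge> 1" "bicombing \<sigma>" shows "cbic \<sigma> n \<tau> x y 0 = x"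
  using assms by (simp add: cbic_def cpt_def bic_0)

lemma cbic_1:
  assumes "n \<ge> 1" "bicombing \<sigma>" shows "cbic \<sigma> n \<tau> x y 1 = y"
proof -
  have "min (nat \<lfloor>real n * 1\<rfloor>) (n-1) = n - 1" by simp
  moreover have "real n * 1 - real (n - 1) = 1" using assms by (simp add: of_nat_diff)
  ultimately have "cbic \<sigma> n \<tau> x y 1 = \<sigma> (cpt \<sigma> \<tau> n x y (n-1)) (cpt \<sigma> \<tau> n x y (n-1+1)) 1"
    by (simp only: cbic_seg)
  also have "\<dots> = cpt \<sigma> \<tau> n x y n" using assms bic_1 by simp
  also have "\<dots> = y" using assms by (simp add: cpt_def)
  finally show ?thesis .
qed

lemma geod_le:
  assumes s: "conical_bicombing \<sigma>" and t: "conical_bicombing \<tau>" and n: "n \<ge> 1"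
    and s01: "s0 \<in> {0..1}" and t01: "t0 \<in> {0..1}" and le: "s0 \<le> t0"
  shows "dist (cbic \<sigma> n \<tau> x y s0) (cbic \<sigma> n \<tau> x y t0) = (t0 - s0) * dist x y"
proof -
  have bs: "bicombing \<sigma>" using s con_bic by auto
  let ?g = "cbic \<sigma> n \<tau> x y"
  have a: "dist (?g 0) (?g s0) \<le> (s0 - 0) * dist x y" using lip[OF s t n _ s01, of 0 x y] s01 by auto
  have b: "dist (?g t0) (?g 1) \<le> (1 - t0) * dist x y" using lip[OF s t n t01] t01 by auto
  have "dist x y = dist (?g 0) (?g 1)" using cbic_0[OF n bs] cbic_1[OF n bs] by simp
  also have "\<dots> \<le> dist (?g 0) (?g s0) + dist (?g s0) (?g t0) + dist (?g t0) (?g 1)"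
    by (meson dist_triangle add_right_mono order_trans)
  finally have "dist x y \<le> s0 * dist x y + dist (?g s0) (?g t0) + (dist x y - t0 * dist x y)"
    using a b by (simp add: algebra_simps)
  then have "(t0 - s0) * dist x y \<le> dist (?g s0) (?g t0)" by (simp add: algebra_simps)
  then show ?thesis using lip[OF s t n s01 t01 le, of x y] by linarith
qed

lemma cbic_bic:
  assumes s: "conical_bicombing \<sigma>" and t: "conical_bicombing \<tau>" and n: "n \<ge> 1"
  shows "bicombing (cbic \<sigma> n \<tau>)"
  unfolding bicombing_def
proof (intro allI conjI ballI)
  have bs: "bicombing \<sigma>" using s con_bic by auto
  fix x y
  show "cbic \<sigma> n \<tau> x y 0 = x" using cbic_0[OF n bs] .
  show "cbic \<sigma> n \<tau> x y 1 = y" using cbic_1[OF n bs] .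
  fix s0 t0 :: real assume s01: "s0 \<in> {0..1}" and t01: "t0 \<in> {0..1}"
  show "dist (cbic \<sigma> n \<tau> x y s0) (cbic \<sigma> n \<tau> x y t0) = \<bar>s0 - t0\<bar> * dist x y"
  proof (cases "s0 \<le> t0")
    case True then show ?thesis using geod_le[OF s t n s01 t01] by simp
  next
    case False then show ?thesis using geod_le[OF s t n t01 s01] by (simp add: dist_commute)
  qed
qed

lemma cbic_con:
  assumes s: "conical_bicombing \<sigma>" and t: "conical_bicombing \<tau>" and n: "n \<ge> 1"
    and t01: "t0 \<in> {0..1}"
  shows "dist (cbic \<sigma> n \<tau> x y t0) (cbic \<sigma> n \<tau> x' y' t0) \<le> (1 - t0) * dist x x' + t0 * dist y y'"
proof -
  have nn: "real n \<ge> 1" using n by simp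
  define k where "k = min (nat \<lfloor>real n * t0\<rfloor>) (n-1)"
  define l where "l = real n * t0 - real k"
  have hk: "k < n" "real k \<le> real n * t0" "real n * t0 \<le> real k + 1"
    using idx[OF n t01] unfolding k_def by auto
  have l01: "l \<in> {0..1}" using hk unfolding l_def by auto
  let ?A = "dist x x'" and ?B = "dist y y'"
  have "dist (cbic \<sigma> n \<tau> x y t0) (cbic \<sigma> n \<tau> x' y' t0) =
     dist (\<sigma> (cpt \<sigma> \<tau> n x y k) (cpt \<sigma> \<tau> n x y (k+1)) l) (\<sigma> (cpt \<sigma> \<tau> n x' y' k) (cpt \<sigma> \<tau> n x' y' (k+1)) l)"
    unfolding k_def l_def by (simp only: cbic_seg)
  also have "\<dots> \<le> (1 - l) * dist (cpt \<sigma> \<tau> n x y k) (cpt \<sigma> \<tau> n x' y' k)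
      + l * dist (cpt \<sigma> \<tau> n x y (k+1)) (cpt \<sigma> \<tau> n x' y' (k+1))"
    by (rule con_dist[OF s l01])
  also have "\<dots> \<le> (1 - l) * ((1 - real k / real n) * ?A + (real k / real n) * ?B)
      + l * ((1 - real (k+1) / real n) * ?A + (real (k+1) / real n) * ?B)"
    using l01 hk cpt_con[OF s t n, of k x y x' y'] cpt_con[OF s t n, of "k+1" x y x' y']
    by (intro add_mono mult_left_mono) auto
  also have "\<dots> = (1 - t0) * ?A + t0 * ?B"
    using nn unfolding l_def by (simp add: field_simps)
  finally show ?thesis .
qed

lemma on_seg:
  assumes c: "consistent_bicombing \<sigma>" and a: "a \<in> {0..1}" and b: "b \<in> {0..1}" and ab: "a \<le> b"
    and lam: "lam \<in> {0..1}"
  shows "\<sigma> (\<sigma> x y a) (\<sigma> x y b) lam = \<sigma> x y ((1 - lam) * a + lam * b)"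
proof -
  have bs: "bicombing \<sigma>" using c unfolding consistent_bicombing_def by blast
  let ?p = "\<sigma> x y a" and ?q = "\<sigma> x y b" and ?D = "dist x y"
  have "\<sigma> ?p ?q lam \<in> \<sigma> ?p ?q ` {0..1}" using lam by blast
  also have "\<dots> \<subseteq> \<sigma> x y ` {0..1}" using c a b unfolding consistent_bicombing_def by blast
  finally obtain s0 where s0: "s0 \<in> {0..1}" "\<sigma> ?p ?q lam = \<sigma> x y s0" by blast
  have m: "(1 - lam) * a + lam * b \<in> {0..1}"
  proof -
    have "(1 - lam) * a + lam * b = a + lam * (b - a)" by (simp add: algebra_simps)
    moreover have "0 \<le> lam * (b - a)" "lam * (b - a) \<le> 1 * (b - a)" using lam ab
      by (auto simp: mult_left_le_one_le)
    ultimately show ?thesis using a b by auto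
  qed
  show ?thesis
  proof (cases "?D = 0")
    case True
    have "\<And>r. r \<in> {0..1} \<Longrightarrow> \<sigma> x y r = x"
      using bic_dist[OF bs _ _, of _ 0 x y] True bic_0[OF bs] by (metis atLeastAtMost_iff dist_eq_0_iff mult_zero_right order_refl zero_le_one)
    then show ?thesis using s0 m by simp
  next
    case False
    then have Dp: "?D > 0" by simp
    have pq: "dist ?p ?q = (b - a) * ?D" using bic_dist[OF bs a b] ab by simp
    have "\<bar>s0 - a\<bar> * ?D = lam * ((b - a) * ?D)"
    proof -
      have "\<bar>s0 - a\<bar> * ?D = dist (\<sigma> x y s0) ?p" using bic_dist[OF bs s0(1) a] by simp
      also have "\<dots> = dist (\<sigma> ?p ?q lam) (\<sigma> ?p ?q 0)" using s0 bic_0[OF bs] by simp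
      also have "\<dots> = lam * dist ?p ?q" using bic_dist[OF bs lam, of 0] lam by simp
      finally show ?thesis using pq by simp
    qed
    then have e1: "\<bar>s0 - a\<bar> = lam * (b - a)" using Dp by simp
    have "\<bar>s0 - b\<bar> * ?D = (1 - lam) * ((b - a) * ?D)"
    proof -
      have "\<bar>s0 - b\<bar> * ?D = dist (\<sigma> x y s0) ?q" using bic_dist[OF bs s0(1) b] by simp
      also have "\<dots> = dist (\<sigma> ?p ?q lam) (\<sigma> ?p ?q 1)" using s0 bic_1[OF bs] by simp
      also have "\<dots> = (1 - lam) * dist ?p ?q" using bic_dist[OF bs lam, of 1] lam by simp
      finally show ?thesis using pq by simp
    qed
    then have e2: "\<bar>s0 - b\<bar> = (1 - lam) * (b - a)" using Dp by simp
    have u: "0 \<le> lam * (b - a)" using lam ab by simp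
    have v: "(1 - lam) * (b - a) = (b - a) - lam * (b - a)" by (simp add: algebra_simps)
    have w: "(1 - lam) * a + lam * b = a + lam * (b - a)" by (simp add: algebra_simps)
    have "s0 = a + lam * (b - a)" using e1 e2 u v by (auto simp: abs_real_def split: if_splits)
    then show ?thesis using s0 w by simp
  qed
qed

lemma cpt_cons:
  assumes c: "consistent_bicombing \<sigma>" and n: "n \<ge> 1" and i: "i \<le> n"
  shows "cpt \<sigma> \<sigma> n x y i = \<sigma> x y (real i / real n)"
proof -
  have bs: "bicombing \<sigma>" using c unfolding consistent_bicombing_def by blast
  have nn: "real n \<ge> 1" using n by simp
  consider "i = 0" | "i = n" | "i \<ge> 1" "i < n" using i by linarith
  then show ?thesis
  proof cases
    case 1 then show ?thesis by (simp add: cpt_def bic_0[OF bs])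
  next
    case 2 then show ?thesis using n by (simp add: cpt_def bic_1[OF bs])
  next
    case 3
    define a where "a = (real i - 1) / real n"
    define b where "b = (real i + 1) / real n"
    have ab: "a \<in> {0..1}" "b \<in> {0..1}" "a \<le> b" using 3 nn unfolding a_def b_def
      by (auto simp: field_simps)
    have "cpt \<sigma> \<sigma> n x y i = \<sigma> (\<sigma> x y a) (\<sigma> x y b) (1/2)"
      using 3 unfolding cpt_def a_def b_def by auto
    also have "\<dots> = \<sigma> x y ((1 - 1/2) * a + 1/2 * b)" using on_seg[OF c ab] by simp
    also have "(1 - 1/2) * a + 1/2 * b = real i / real n" unfolding a_def b_def
      using nn by (simp add: field_simps)
    finally show ?thesis .
  qed
qed

lemma cbic_cons:
  assumes c: "consistent_bicombing \<sigma>" and n: "n \<ge> 1" and t01: "t0 \<in> {0..1}"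
  shows "cbic \<sigma> n \<sigma> x y t0 = \<sigma> x y t0"
proof -
  have nn: "real n \<ge> 1" using n by simp
  define k where "k = min (nat \<lfloor>real n * t0\<rfloor>) (n-1)"
  define l where "l = real n * t0 - real k"
  have hk: "k < n" "real k \<le> real n * t0" "real n * t0 \<le> real k + 1"
    using idx[OF n t01] unfolding k_def by auto
  have l01: "l \<in> {0..1}" using hk unfolding l_def by auto
  have ab: "real k / real n \<in> {0..1}" "real (k+1) / real n \<in> {0..1}" "real k / real n \<le> real (k+1) / real n"
    using hk nn by (auto simp: field_simps)
  have "cbic \<sigma> n \<sigma> x y t0 = \<sigma> (cpt \<sigma> \<sigma> n x y k) (cpt \<sigma> \<sigma> n x y (k+1)) l"
    unfolding k_def l_def by (simp only: cbic_seg)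
  also have "\<dots> = \<sigma> (\<sigma> x y (real k / real n)) (\<sigma> x y (real (k+1) / real n)) l"
    using cpt_cons[OF c n, of k] cpt_cons[OF c n, of "k+1"] hk by simp
  also have "\<dots> = \<sigma> x y ((1 - l) * (real k / real n) + l * (real (k+1) / real n))"
    by (rule on_seg[OF c ab l01])
  also have "(1 - l) * (real k / real n) + l * (real (k+1) / real n) = t0"
    using nn unfolding l_def by (simp add: field_simps)
  finally show ?thesis .
qed

theorem lemma5p1:
  fixes \<sigma> \<tau> :: "'a::metric_space \<Rightarrow> 'a \<Rightarrow> real \<Rightarrow> 'a" and n :: nat
  assumes "conical_bicombing \<sigma>" and "conical_bicombing \<tau>" and "n \<ge> 1"
  shows "conical_bicombing (cbic \<sigma> n \<tau>)
    \<and> (consistent_bicombing \<sigma> \<longrightarrow> (\<forall>x y. \<forall>t\<in>{0..1}. cbic \<sigma> n \<sigma> x y t = \<sigma> x y t))"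
  using cbic_bic[OF assms] cbic_con[OF assms] cbic_cons[OF _ assms(3)]
  unfolding conical_bicombing_def[of "cbic \<sigma> n \<tau>"] by blast

end
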